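(* Let $S$ be a nonempty subset of $\mathbb{Z}$ and $\mathcal{T}\subseteq\mathbb{N}$. Then for all integers $0\le\ell\le k<|S|$, the generalized binomial coefficient $\binom{k}{\ell}_{S,\mathcal{T}}:=\dfrac{k!_{S,\mathcal{T}}}{\ell!_{S,\mathcal{T}}\,(k-\ell)!_{S,\mathcal{T}}}$ is a positive integer.
   Context: $\mathbb{N}=\{0,1,2,\dots\}$. For an integer $b\ge0$ and $a\in\mathbb{Z}$ define $\operatorname{ord}_b(a):=\sup\{k\in\mathbb{N}: a\mathbb{Z}\subseteq b^k\mathbb{Z}\}$ (convention $0^0=1$); thus for $b\ge2$ it is the largest $k$ with $b^k\mid a$ ($+\infty$ for $a=0$), $\operatorname{ord}_0(a)=+\infty$ if $a=0$ and $0$ otherwise, and $\operatorname{ord}_1(a)=+\infty$. For nonempty $S\subseteq\mathbb{Z}$, a $b$-ordering of $S$ is a sequence $(a_i)_{i\ge0}$ in $S$ such that for each $i\ge1$, $a_i$ attains $\min_{a'\in S}\sum_{j=0}^{i-1}\operatorname{ord}_b(a'-a_j)$; the $b$-exponent sequence is $\alpha_k(S,b):=\sum_{j=0}^{k-1}\operatorname{ord}_b(a_k-a_j)$ for any $b$-ordering (independent of the choice). For $\mathcal{T}\subseteq\mathbb{N}$ the generalized factorial is $k!_{S,\mathcal{T}}:=\prod_{b\in\mathcal{T}}b^{\alpha_k(S,b)}$, with conventions $b^{+\infty}=0$ for $b=0$ and $b\ge2$, $1^{+\infty}=1$, and $b^0=1$ for all $b\in\mathbb{N}$. *)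

theory Defs
  imports Main "HOL-Library.Extended_Nat" "HOL-Library.Groups_Big_Fun"
begin

text \<open>ord_b(a) = sup {k. a Z \<subseteq> b^k Z}, with 0^0 = 1 (as in Isabelle's power).\<close>
definition ord_b :: "nat \<Rightarrow> int \<Rightarrow> enat" where
  "ord_b b a = (SUP k \<in> {k::nat. (int b) ^ k dvd a}. enat k)"

definition is_b_ordering :: "int set \<Rightarrow> nat \<Rightarrow> (nat \<Rightarrow> int) \<Rightarrow> bool" where
  "is_b_ordering S b a \<longleftrightarrow>
     (\<forall>i. a i \<in> S) \<and>
     (\<forall>i\<ge>1. \<forall>a'\<in>S. (\<Sum>j<i. ord_b b (a i - a j)) \<le> (\<Sum>j<i. ord_b b (a' - a j)))"

text \<open>b-exponent sequence, computed from some (any) b-ordering.\<close>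
definition alpha_seq :: "int set \<Rightarrow> nat \<Rightarrow> nat \<Rightarrow> enat" where
  "alpha_seq S b k = (let a = (SOME a. is_b_ordering S b a) in (\<Sum>j<k. ord_b b (a k - a j)))"

fun epow :: "nat \<Rightarrow> enat \<Rightarrow> nat" where
  "epow b (enat n) = b ^ n"
| "epow b \<infinity> = (if b = 1 then 1 else 0)"

definition gen_fact :: "int set \<Rightarrow> nat set \<Rightarrow> nat \<Rightarrow> nat" where
  "gen_fact S T k = Prod_any (\<lambda>b. if b \<in> T then epow b (alpha_seq S b k) else 1)"

end

theory Submission
  imports Defs "HOL-Computational_Algebra.Formal_Power_Series"
begin


lemma enat_eqI_ge:
  assumes "\<And>e. enat e \<le> x \<longleftrightarrow> enat e \<le> y"
  shows "x = y"
proof (cases x)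
  case (enat n)
  show ?thesis
  proof (cases y)
    case (enat n')
    have "n \<le> n'" using assms[of n] \<open>x = enat n\<close> enat by simp
    moreover have "n' \<le> n" using assms[of n'] \<open>x = enat n\<close> enat by simp
    ultimately show ?thesis using \<open>x = enat n\<close> enat by simp
  next
    case infinity
    then show ?thesis using assms[of "Suc n"] enat by simp
  qed
next
  case infinity
  show ?thesis
  proof (cases y)
    case (enat n')
    then show ?thesis using assms[of "Suc n'"] infinity by simp
  qed (use infinity in simp)
qed

lemma enat_leI_ge:
  assumes "\<And>e. enat e \<le> x \<Longrightarrow> enat e \<le> y"
  shows "x \<le> y"
proof (cases x)
  case (enat n)
  then show ?thesis using assms[of n] by simp
next
  case infinity
  show ?thesis
  proof (cases y)
    case (enat n')
    then show ?thesis using assms[of "Suc n'"] infinity by simp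
  qed simp
qed

lemma ord_ge: "enat e \<le> ord_b b a \<longleftrightarrow> int b ^ e dvd a"
proof
  assume "int b ^ e dvd a"
  then show "enat e \<le> ord_b b a" unfolding ord_b_def by (intro SUP_upper2[of e]) auto
next
  assume h: "enat e \<le> ord_b b a"
  show "int b ^ e dvd a"
  proof (rule ccontr)
    assume n: "\<not> int b ^ e dvd a"
    then have "e \<noteq> 0" by (cases e) auto
    have "\<forall>k\<in>{k. int b ^ k dvd a}. enat k \<le> enat (e - 1)"
    proof
      fix k assume "k \<in> {k. int b ^ k dvd a}"
      then have "int b ^ k dvd a" by simp
      have "k < e"
      proof (rule ccontr)
        assume "\<not> k < e"
        then have "int b ^ e dvd int b ^ k" by (simp add: le_imp_power_dvd)
        then show False using n \<open>int b ^ k dvd a\<close> dvd_trans by blast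
      qed
      then show "enat k \<le> enat (e - 1)" by simp
    qed
    then have "ord_b b a \<le> enat (e - 1)" unfolding ord_b_def by (intro SUP_least) auto
    from order_trans[OF h this] \<open>e \<noteq> 0\<close> show False by simp
  qed
qed

lemma ord_zero: "ord_b b 0 = \<infinity>"
  by (rule enat_eqI_ge) (simp add: ord_ge)

lemma ord_eq0_iff: "ord_b b a = 0 \<longleftrightarrow> \<not> int b dvd a"
proof -
  have "ord_b b a = 0 \<longleftrightarrow> \<not> enat 1 \<le> ord_b b a"
    by (cases "ord_b b a") (auto simp: one_enat_def zero_enat_def)
  then show ?thesis by (simp add: ord_ge)
qed

lemma ord_fin:
  assumes "b \<noteq> 1" "a \<noteq> 0"
  shows "ord_b b a \<noteq> \<infinity>"
proof
  assume inf: "ord_b b a = \<infinity>"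
  then have all: "\<And>e. int b ^ e dvd a" using ord_ge by (metis enat_ord_code(3))
  show False
  proof (cases "b = 0")
    case True
    then show ?thesis using all[of 1] assms by simp
  next
    case False
    then have b2: "b \<ge> 2" using assms by simp
    let ?e = "nat \<bar>a\<bar>"
    have "\<bar>int b ^ ?e\<bar> \<le> \<bar>a\<bar>" using all[of ?e] assms dvd_imp_le_int by blast
    moreover have "int ?e < 2 ^ ?e" by (rule of_nat_less_two_power)
    moreover have "(2::int) ^ ?e \<le> int b ^ ?e" using b2 by (intro power_mono) auto
    ultimately show False by simp
  qed
qed

lemma ord_0_nz: "a \<noteq> 0 \<Longrightarrow> ord_b 0 a = 0"
  by (simp add: ord_eq0_iff)



lemma digit_uniq:
  fixes B u u' d d' :: int
  assumes "0 \<le> u" "u < B" "0 \<le> u'" "u' < B" "B * d + u = B * d' + u'"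
  shows "u = u' \<and> d = d'"
proof -
  have "(B * d + u) mod B = u" using assms(1,2) by simp
  moreover have "(B * d' + u') mod B = u'" using assms(3,4) by simp
  ultimately have "u = u'" using assms(5) by metis
  then show ?thesis using assms by simp
qed

lemma mod_digits:
  fixes x y :: int
  assumes "b \<ge> (2::nat)"
  shows "(x mod int b ^ e = y mod int b ^ e) \<longleftrightarrow> (\<forall>i<e. x div int b ^ i mod int b = y div int b ^ i mod int b)"
proof (induction e)
  case 0
  then show ?case by simp
next
  case (Suc e)
  have bpos: "int b ^ e > 0" using assms by simp
  have ex: "x mod int b ^ Suc e = int b ^ e * (x div int b ^ e mod int b) + x mod int b ^ e"
    using zmod_zmult2_eq[of "int b" "x" "int b ^ e"] by (simp add: mult.commute)
  have ey: "y mod int b ^ Suc e = int b ^ e * (y div int b ^ e mod int b) + y mod int b ^ e"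
    using zmod_zmult2_eq[of "int b" "y" "int b ^ e"] by (simp add: mult.commute)
  have "(x mod int b ^ Suc e = y mod int b ^ Suc e) \<longleftrightarrow>
        (x mod int b ^ e = y mod int b ^ e \<and> x div int b ^ e mod int b = y div int b ^ e mod int b)"
  proof
    assume "x mod int b ^ Suc e = y mod int b ^ Suc e"
    then show "x mod int b ^ e = y mod int b ^ e \<and> x div int b ^ e mod int b = y div int b ^ e mod int b"
      using digit_uniq[of "x mod int b ^ e" "int b ^ e" "y mod int b ^ e"] ex ey bpos by simp
  qed (use ex ey in simp)
  also have "\<dots> \<longleftrightarrow> (\<forall>i<Suc e. x div int b ^ i mod int b = y div int b ^ i mod int b)"
    using Suc.IH less_Suc_eq by auto
  finally show ?case .
qed

definition phi :: "nat \<Rightarrow> int \<Rightarrow> real fps" where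
  "phi b x = Abs_fps (\<lambda>i. real_of_int (x div int b ^ i mod int b))"

definition val :: "real fps \<Rightarrow> enat" where
  "val f = (if f = 0 then \<infinity> else enat (subdegree f))"

lemma val_ge: "enat e \<le> val f \<longleftrightarrow> (\<forall>i<e. fps_nth f i = 0)"
proof (cases "f = 0")
  case True
  then show ?thesis by (simp add: val_def)
next
  case False
  show ?thesis
  proof
    assume "enat e \<le> val f"
    then have "e \<le> subdegree f" using False by (simp add: val_def)
    then show "\<forall>i<e. fps_nth f i = 0" by (meson less_le_trans nth_less_subdegree_zero)
  next
    assume "\<forall>i<e. fps_nth f i = 0"
    then have "e \<le> subdegree f" using False subdegree_geI by blast
    then show "enat e \<le> val f" using False by (simp add: val_def)
  qed
qed

lemma val_0 [simp]: "val 0 = \<infinity>" by (simp add: val_def)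
lemma val_1 [simp]: "val 1 = 0" by (simp add: val_def zero_enat_def)

lemma val_mult: "val (f * g) = val f + val g"
proof (cases "f = 0 \<or> g = 0")
  case True
  then show ?thesis by (auto simp: val_def)
next
  case False
  then have "f * g \<noteq> 0" by simp
  then show ?thesis using False by (simp add: val_def subdegree_mult)
qed

lemma val_add: "min (val f) (val g) \<le> val (f + g)"
  by (rule enat_leI_ge) (simp add: val_ge)

lemma val_uminus: "val (- f) = val f"
  by (rule enat_eqI_ge) (simp add: val_ge)

lemma val_prod: "val (\<Prod>i\<in>A. f i) = (\<Sum>i\<in>A. val (f i))"
  by (induction A rule: infinite_finite_induct) (simp_all add: val_mult)

lemma val_sum_ge: "(\<And>i. i \<in> A \<Longrightarrow> N \<le> val (f i)) \<Longrightarrow> N \<le> val (\<Sum>i\<in>A. f i)"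
proof (induction A rule: infinite_finite_induct)
  case (insert x F)
  then have "N \<le> min (val (f x)) (val (sum f F))" by simp
  also have "\<dots> \<le> val (f x + sum f F)" by (rule val_add)
  finally show ?case using insert by simp
qed simp_all
lemma ord_val:
  assumes "b \<ge> 2"
  shows "ord_b b (x - y) = val (phi b x - phi b y)"
proof (rule enat_eqI_ge)
  fix e
  have "enat e \<le> ord_b b (x - y) \<longleftrightarrow> x mod int b ^ e = y mod int b ^ e"
    by (simp add: ord_ge mod_eq_dvd_iff)
  also have "\<dots> \<longleftrightarrow> (\<forall>i<e. x div int b ^ i mod int b = y div int b ^ i mod int b)"
    using mod_digits[OF assms] .
  also have "\<dots> \<longleftrightarrow> (\<forall>i<e. fps_nth (phi b x - phi b y) i = 0)"
    by (simp add: phi_def)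
  also have "\<dots> \<longleftrightarrow> enat e \<le> val (phi b x - phi b y)"
    by (simp add: val_ge)
  finally show "enat e \<le> ord_b b (x - y) \<longleftrightarrow> enat e \<le> val (phi b x - phi b y)" .
qed



lemma newton:
  fixes w u :: "nat \<Rightarrow> 'a::comm_ring_1"
  shows "\<exists>c. c k = 1 \<and> (\<forall>x. (\<Prod>j<k. x - u j) = (\<Sum>t\<le>k. c t * (\<Prod>j<t. x - w j)))"
proof (induction k)
  case 0
  show ?case by (rule exI[of _ "\<lambda>_. 1"]) simp
next
  case (Suc k)
  obtain c where c1: "c k = 1" and ce: "\<forall>x. (\<Prod>j<k. x - u j) = (\<Sum>t\<le>k. c t * (\<Prod>j<t. x - w j))"
    using Suc.IH by blast
  define c' where "c' t = (if t = 0 then 0 else c (t - 1)) + (if t \<le> k then c t * (w t - u k) else 0)" for t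
  show ?case
  proof (intro exI[of _ c'] conjI allI)
    show "c' (Suc k) = 1" using c1 by (simp add: c'_def)
    fix x
    let ?f = "\<lambda>t. \<Prod>j<t. x - w j"
    have fs: "?f (Suc t) = ?f t * (x - w t)" for t by simp
    have "(\<Prod>j<Suc k. x - u j) = (\<Sum>t\<le>k. c t * ?f t) * (x - u k)" using ce by simp
    also have "\<dots> = (\<Sum>t\<le>k. c t * ?f (Suc t) + c t * (w t - u k) * ?f t)"
      unfolding sum_distrib_right fs by (intro sum.cong) (auto simp: algebra_simps)
    also have "\<dots> = (\<Sum>t\<le>k. c t * ?f (Suc t)) + (\<Sum>t\<le>k. c t * (w t - u k) * ?f t)"
      by (rule sum.distrib)
    also have "(\<Sum>t\<le>k. c t * ?f (Suc t)) = (\<Sum>t\<le>Suc k. (if t = 0 then 0 else c (t-1)) * ?f t)"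
      by (simp only: sum.atMost_Suc_shift) simp
    also have "(\<Sum>t\<le>k. c t * (w t - u k) * ?f t) = (\<Sum>t\<le>Suc k. (if t \<le> k then c t * (w t - u k) else 0) * ?f t)"
      by (simp add: sum.atMost_Suc)
    also have "(\<Sum>t\<le>Suc k. (if t = 0 then 0 else c (t-1)) * ?f t) + (\<Sum>t\<le>Suc k. (if t \<le> k then c t * (w t - u k) else 0) * ?f t)
        = (\<Sum>t\<le>Suc k. c' t * ?f t)"
      unfolding sum.distrib[symmetric] c'_def by (intro sum.cong) (auto simp: algebra_simps)
    finally show "(\<Prod>j<Suc k. x - u j) = (\<Sum>t\<le>Suc k. c' t * ?f t)" .
  qed
qed

lemma key:
  fixes w u :: "nat \<Rightarrow> real fps" and \<alpha> :: "nat \<Rightarrow> enat"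
  assumes ge: "\<And>s t. s < t \<Longrightarrow> t \<le> k \<Longrightarrow> \<alpha> s \<le> val (\<Prod>j<s. w t - w j)"
    and eq: "\<And>t. t \<le> k \<Longrightarrow> val (\<Prod>j<t. w t - w j) = \<alpha> t"
  shows "\<exists>i\<le>k. val (\<Prod>j<k. w i - u j) \<le> \<alpha> k"
proof -
  obtain c where c1: "c k = 1" and ce: "\<And>x. (\<Prod>j<k. x - u j) = (\<Sum>t\<le>k. c t * (\<Prod>j<t. x - w j))"
    using newton[of k u w] by blast
  define N where "N = Min ((\<lambda>i. val (\<Prod>j<k. w i - u j)) ` {..k})"
  have Nle: "N \<le> val (\<Prod>j<k. w i - u j)" if "i \<le> k" for i
    unfolding N_def using that by (intro Min_le) auto
  have Nin: "N \<in> (\<lambda>i. val (\<Prod>j<k. w i - u j)) ` {..k}"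
    unfolding N_def by (intro Min_in) auto
  have main: "N \<le> val (c t) + \<alpha> t" if "t \<le> k" for t
    using that
  proof (induction t rule: less_induct)
    case (less t)
    let ?f = "\<lambda>s. \<Prod>j<s. w t - w j"
    have z: "?f s = 0" if "t < s" for s using that by (intro prod_zero) auto
    have "(\<Prod>j<k. w t - u j) = (\<Sum>s\<le>k. c s * ?f s)" by (rule ce)
    also have "\<dots> = (\<Sum>s\<le>t. c s * ?f s)"
      by (rule sum.mono_neutral_right) (use z less.prems in auto)
    also have "\<dots> = c t * ?f t + (\<Sum>s<t. c s * ?f s)"
      by (simp add: lessThan_Suc_atMost[symmetric])
    finally have eqn: "c t * ?f t = (\<Prod>j<k. w t - u j) + - (\<Sum>s<t. c s * ?f s)"
      by (simp add: algebra_simps)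
    have "N \<le> val (\<Sum>s<t. c s * ?f s)"
    proof (rule val_sum_ge)
      fix s assume "s \<in> {..<t}"
      then have "s < t" by simp
      have "N \<le> val (c s) + \<alpha> s" using less.IH[of s] \<open>s<t\<close> less.prems by simp
      also have "\<dots> \<le> val (c s) + val (?f s)" using ge[of s t] \<open>s<t\<close> less.prems by (simp add: add_left_mono)
      also have "\<dots> = val (c s * ?f s)" by (simp add: val_mult)
      finally show "N \<le> val (c s * ?f s)" .
    qed
    then have "N \<le> min (val (\<Prod>j<k. w t - u j)) (val (- (\<Sum>s<t. c s * ?f s)))"
      using Nle less.prems by (simp add: val_uminus)
    also have "\<dots> \<le> val (c t * ?f t)" unfolding eqn by (rule val_add)
    also have "\<dots> = val (c t) + \<alpha> t" by (simp add: val_mult eq less.prems)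
    finally show ?case .
  qed
  from main[of k] c1 have "N \<le> \<alpha> k" by simp
  with Nin show ?thesis by auto
qed



definition pick :: "int set \<Rightarrow> nat \<Rightarrow> int list \<Rightarrow> int" where
  "pick S b xs = (SOME x. x \<in> S \<and> (\<forall>x'\<in>S. (\<Sum>j<length xs. ord_b b (x - xs!j)) \<le> (\<Sum>j<length xs. ord_b b (x' - xs!j))))"

lemma pick:
  assumes "S \<noteq> {}"
  shows "pick S b xs \<in> S \<and> (\<forall>x'\<in>S. (\<Sum>j<length xs. ord_b b (pick S b xs - xs!j)) \<le> (\<Sum>j<length xs. ord_b b (x' - xs!j)))"
proof -
  define h where "h x = (\<Sum>j<length xs. ord_b b (x - xs!j))" for x
  obtain x0 where "x0 \<in> S" using assms by blast
  define v where "v = (LEAST v. v \<in> h ` S)"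
  have "v \<in> h ` S" unfolding v_def by (rule LeastI[of _ "h x0"]) (use \<open>x0 \<in> S\<close> in blast)
  then obtain x where x: "x \<in> S" "h x = v" by blast
  have "v \<le> h x'" if "x' \<in> S" for x' unfolding v_def by (rule Least_le) (use that in blast)
  then have "\<forall>x'\<in>S. h x \<le> h x'" using x by simp
  then have "\<exists>x. x \<in> S \<and> (\<forall>x'\<in>S. h x \<le> h x')" using x by blast
  then show ?thesis unfolding pick_def h_def by (rule someI_ex)
qed

fun bseq :: "int set \<Rightarrow> nat \<Rightarrow> nat \<Rightarrow> int list" where
  "bseq S b 0 = []"
| "bseq S b (Suc n) = bseq S b n @ [pick S b (bseq S b n)]"

lemma bseq_len [simp]: "length (bseq S b n) = n"
  by (induction n) auto

lemma bseq_nth: "i < n \<Longrightarrow> n \<le> m \<Longrightarrow> bseq S b m ! i = bseq S b n ! i"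
proof (induction m)
  case 0
  then show ?case by simp
next
  case (Suc m)
  show ?case
  proof (cases "n \<le> m")
    case True
    then have "bseq S b (Suc m) ! i = bseq S b m ! i" using Suc.prems by (simp add: nth_append)
    then show ?thesis using Suc True by simp
  next
    case False
    then show ?thesis using Suc.prems by (simp add: le_Suc_eq)
  qed
qed

definition aseq :: "int set \<Rightarrow> nat \<Rightarrow> nat \<Rightarrow> int" where
  "aseq S b i = pick S b (bseq S b i)"

lemma bseq_aseq: "j < i \<Longrightarrow> bseq S b i ! j = aseq S b j"
proof -
  assume "j < i"
  then have "bseq S b i ! j = bseq S b (Suc j) ! j" by (intro bseq_nth) auto
  also have "\<dots> = aseq S b j" by (simp add: nth_append aseq_def)
  finally show ?thesis .
qed

lemma exists_bord:
  assumes "S \<noteq> {}"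
  shows "is_b_ordering S b (aseq S b)"
  unfolding is_b_ordering_def
proof (intro conjI allI impI ballI)
  fix i show "aseq S b i \<in> S" using pick[OF assms] by (simp add: aseq_def)
next
  fix i :: nat and a' assume "1 \<le> i" "a' \<in> S"
  have "(\<Sum>j<i. ord_b b (aseq S b i - bseq S b i ! j)) \<le> (\<Sum>j<i. ord_b b (a' - bseq S b i ! j))"
    using pick[OF assms, of b "bseq S b i"] \<open>a' \<in> S\<close> by (simp add: aseq_def)
  moreover have "(\<Sum>j<i. ord_b b (x - bseq S b i ! j)) = (\<Sum>j<i. ord_b b (x - aseq S b j))" for x
    by (intro sum.cong) (auto simp: bseq_aseq)
  ultimately show "(\<Sum>j<i. ord_b b (aseq S b i - aseq S b j)) \<le> (\<Sum>j<i. ord_b b (a' - aseq S b j))"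
    by simp
qed

definition bo :: "int set \<Rightarrow> nat \<Rightarrow> nat \<Rightarrow> int" where
  "bo S b = (SOME a. is_b_ordering S b a)"

lemma bo: "S \<noteq> {} \<Longrightarrow> is_b_ordering S b (bo S b)"
  unfolding bo_def by (rule someI[where P="is_b_ordering S b", OF exists_bord])

lemma alpha_eq: "alpha_seq S b k = (\<Sum>j<k. ord_b b (bo S b k - bo S b j))"
  by (simp add: alpha_seq_def bo_def Let_def)

lemma bo_in: "S \<noteq> {} \<Longrightarrow> bo S b i \<in> S"
  using bo unfolding is_b_ordering_def by blast

lemma alpha_min:
  assumes "S \<noteq> {}" "x \<in> S"
  shows "alpha_seq S b i \<le> (\<Sum>j<i. ord_b b (x - bo S b j))"
proof (cases "i = 0")
  case True
  then show ?thesis by (simp add: alpha_eq)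
next
  case False
  have "\<forall>i\<ge>1. \<forall>a'\<in>S. (\<Sum>j<i. ord_b b (bo S b i - bo S b j)) \<le> (\<Sum>j<i. ord_b b (a' - bo S b j))"
    using bo[OF assms(1), of b] unfolding is_b_ordering_def by blast
  then have "(\<Sum>j<i. ord_b b (bo S b i - bo S b j)) \<le> (\<Sum>j<i. ord_b b (x - bo S b j))"
    using False assms(2) by simp
  then show ?thesis by (simp only: alpha_eq)
qed

lemma exists_new:
  assumes "S \<noteq> {}" "finite S \<longrightarrow> k < card S"
  shows "\<exists>x\<in>S. \<forall>j<k. x \<noteq> bo S b j"
proof -
  have "S - bo S b ` {..<k} \<noteq> {}"
  proof (cases "finite S")
    case True
    have "card (bo S b ` {..<k}) \<le> k" using card_image_le[of "{..<k}" "bo S b"] by simp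
    show ?thesis
    proof
      assume "S - bo S b ` {..<k} = {}"
      then have "S \<subseteq> bo S b ` {..<k}" by blast
      then have "card S \<le> card (bo S b ` {..<k})" by (intro card_mono) simp_all
      then show False using \<open>card (bo S b ` {..<k}) \<le> k\<close> True assms(2) by linarith
    qed
  next
    case False
    have fin: "finite (bo S b ` {..<k})" by simp
    show ?thesis
    proof
      assume "S - bo S b ` {..<k} = {}"
      then have "S \<subseteq> bo S b ` {..<k}" by blast
      then show False using False fin finite_subset by blast
    qed
  qed
  then show ?thesis by blast
qed

lemma sum_enat_fin: "(\<And>j. j \<in> A \<Longrightarrow> f j \<noteq> (\<infinity>::enat)) \<Longrightarrow> sum f A \<noteq> \<infinity>"
proof (induction A rule: infinite_finite_induct)
  case (insert x F)
  then have "f x \<noteq> \<infinity>" "sum f F \<noteq> \<infinity>" by auto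
  moreover have "sum f (insert x F) = f x + sum f F" using insert(1,2) by simp
  ultimately show ?case by (simp only: plus_eq_infty_iff_enat) blast
qed simp_all

lemma alpha0:
  assumes "S \<noteq> {}" "finite S \<longrightarrow> k < card S"
  shows "alpha_seq S 0 k = 0"
proof -
  obtain x where x: "x \<in> S" "\<forall>j<k. x \<noteq> bo S 0 j" using exists_new[OF assms] by blast
  have "alpha_seq S 0 k \<le> (\<Sum>j<k. ord_b 0 (x - bo S 0 j))" by (rule alpha_min[OF assms(1) x(1)])
  also have "\<dots> = 0" using x(2) by (intro sum.neutral) (auto intro!: ord_0_nz)
  finally show ?thesis by simp
qed

lemma alpha_fin:
  assumes "S \<noteq> {}" "finite S \<longrightarrow> k < card S" "b \<ge> 2"
  shows "alpha_seq S b k \<noteq> \<infinity>"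
proof -
  obtain x where x: "x \<in> S" "\<forall>j<k. x \<noteq> bo S b j" using exists_new[OF assms(1,2)] by blast
  have "alpha_seq S b k \<le> (\<Sum>j<k. ord_b b (x - bo S b j))" by (rule alpha_min[OF assms(1) x(1)])
  moreover have "(\<Sum>j<k. ord_b b (x - bo S b j)) \<noteq> \<infinity>"
    using x(2) assms(3) by (intro sum_enat_fin ord_fin) auto
  ultimately show ?thesis
  proof (intro notI)
    assume "alpha_seq S b k \<le> (\<Sum>j<k. ord_b b (x - bo S b j))" "(\<Sum>j<k. ord_b b (x - bo S b j)) \<noteq> \<infinity>" "alpha_seq S b k = \<infinity>"
    then show False by simp
  qed
qed

lemma sum_split_add: "(\<Sum>j<l+(m::nat). g j) = (\<Sum>j<l. g j) + (\<Sum>j<m. g (l + j))"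
  by (induction m) (simp_all add: algebra_simps)



lemma superadd:
  assumes "S \<noteq> {}" "finite S \<longrightarrow> l + m < card S" "b \<ge> 2"
  shows "alpha_seq S b l + alpha_seq S b m \<le> alpha_seq S b (l + m)"
proof -
  define k where "k = l + m"
  define A where "A = bo S b"
  define y where "y j = (if j < l then A j else A (j - l))" for j
  define w where "w t = phi b (A t)" for t
  define u where "u j = phi b (y j)" for j
  have AS: "A i \<in> S" for i unfolding A_def using bo_in[OF assms(1)] .
  have vp: "val (\<Prod>j<n. phi b x - phi b (z j)) = (\<Sum>j<n. ord_b b (x - z j))" for n x and z :: "nat \<Rightarrow> int"
    by (simp add: val_prod ord_val[OF assms(3), symmetric])
  have "\<exists>i\<le>k. val (\<Prod>j<k. w i - u j) \<le> alpha_seq S b k"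
  proof (rule key)
    fix s t assume "s < t" "t \<le> k"
    show "alpha_seq S b s \<le> val (\<Prod>j<s. w t - w j)"
      unfolding w_def vp A_def by (rule alpha_min[OF assms(1) bo_in[OF assms(1)]])
  next
    fix t assume "t \<le> k"
    show "val (\<Prod>j<t. w t - w j) = alpha_seq S b t"
      unfolding w_def vp A_def by (simp add: alpha_eq)
  qed
  then obtain i where i1: "val (\<Prod>j<k. w i - u j) \<le> alpha_seq S b k" by blast
  have i2: "val (\<Prod>j<k. w i - u j) = (\<Sum>j<l. ord_b b (A i - A j)) + (\<Sum>j<m. ord_b b (A i - A j))"
    unfolding w_def u_def vp k_def sum_split_add y_def by simp
  have i3: "alpha_seq S b l \<le> (\<Sum>j<l. ord_b b (A i - A j))"
    unfolding A_def by (rule alpha_min[OF assms(1) bo_in[OF assms(1)]])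
  have i4: "alpha_seq S b m \<le> (\<Sum>j<m. ord_b b (A i - A j))"
    unfolding A_def by (rule alpha_min[OF assms(1) bo_in[OF assms(1)]])
  have "alpha_seq S b l + alpha_seq S b m \<le> (\<Sum>j<l. ord_b b (A i - A j)) + (\<Sum>j<m. ord_b b (A i - A j))"
    using i3 i4 by (rule add_mono)
  also have "\<dots> = val (\<Prod>j<k. w i - u j)" using i2 by simp
  also have "\<dots> \<le> alpha_seq S b k" by (rule i1)
  finally show ?thesis unfolding k_def .
qed



lemma alpha_large:
  assumes "S \<noteq> {}" "finite S \<longrightarrow> k < card S"
  shows "\<exists>D. \<forall>b>D. alpha_seq S b k = 0"
proof (cases "k = 0")
  case True
  then show ?thesis by (simp add: alpha_eq)
next
  case False
  obtain Z where Z: "finite Z" "card Z = Suc k" "Z \<subseteq> S"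
  proof (cases "finite S")
    case True
    then obtain Z where "Z \<subseteq> S" "card Z = Suc k" using obtain_subset_with_card_n[of "Suc k" S] assms(2) by auto
    then show ?thesis using that True finite_subset by blast
  next
    case False
    then show ?thesis using infinite_arbitrarily_large[of S "Suc k"] that by blast
  qed
  have Zne: "Z \<noteq> {}" using Z(2) by auto
  define M where "M = Max (abs ` Z)"
  have absM: "\<bar>z\<bar> \<le> M" if "z \<in> Z" for z unfolding M_def using Z(1) that by (intro Max_ge) auto
  have M0: "0 \<le> M" using Zne absM by force
  show ?thesis
  proof (intro exI[of _ "nat (2*M)"] allI impI)
    fix b assume bD: "b > nat (2*M)"
    then have bM: "2 * M < int b" using M0 by linarith
    have dif: "z = z'" if "z \<in> Z" "z' \<in> Z" "int b dvd z - z'" for z z'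
    proof (rule ccontr)
      assume "z \<noteq> z'"
      then have "\<bar>int b\<bar> \<le> \<bar>z - z'\<bar>" using dvd_imp_le_int[of "z - z'" "int b"] that(3) by simp
      moreover have "\<bar>z - z'\<bar> \<le> 2*M" using absM[OF that(1)] absM[OF that(2)] by linarith
      ultimately show False using bM by linarith
    qed
    have "\<exists>z\<in>Z. \<forall>j<k. \<not> int b dvd (z - bo S b j)"
    proof (rule ccontr)
      assume "\<not> ?thesis"
      then have "\<forall>z\<in>Z. \<exists>j. j < k \<and> int b dvd (z - bo S b j)" by blast
      then obtain g where g: "\<forall>z\<in>Z. g z < k \<and> int b dvd (z - bo S b (g z))" by metis
      have "inj_on g Z"
      proof (rule inj_onI)
        fix z z' assume zz: "z \<in> Z" "z' \<in> Z" "g z = g z'"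
        then have "int b dvd (z - bo S b (g z)) - (z' - bo S b (g z))" using g by (metis dvd_diff)
        then have "int b dvd z - z'" by simp
        then show "z = z'" using dif zz by blast
      qed
      then have "card Z \<le> card {..<k}" using g by (intro card_inj_on_le) auto
      then show False using Z(2) by simp
    qed
    then obtain z where z: "z \<in> Z" "\<forall>j<k. \<not> int b dvd (z - bo S b j)" by blast
    have "alpha_seq S b k \<le> (\<Sum>j<k. ord_b b (z - bo S b j))"
      using alpha_min assms(1) Z(3) z(1) by blast
    also have "\<dots> = 0" using z(2) by (simp add: ord_eq0_iff)
    finally show "alpha_seq S b k = 0" by simp
  qed
qed

lemma epow_1: "epow (Suc 0) x = 1" by (cases x) auto
lemma epow_0e [simp]: "epow b 0 = 1" by (simp add: zero_enat_def)

definition fac :: "int set \<Rightarrow> nat set \<Rightarrow> nat \<Rightarrow> nat \<Rightarrow> nat" where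
  "fac S T k = (\<lambda>b. if b \<in> T then epow b (alpha_seq S b k) else 1)"

lemma factor:
  assumes "S \<noteq> {}" "l \<le> k" "finite S \<longrightarrow> k < card S"
  shows "\<exists>q>0. fac S T k b = fac S T l b * fac S T (k-l) b * q \<and> fac S T l b > 0 \<and> fac S T (k-l) b > 0"
proof -
  have hl: "finite S \<longrightarrow> l < card S" and hm: "finite S \<longrightarrow> k - l < card S" using assms by auto
  consider "b \<notin> T" | "b \<in> T" "b = 0" | "b \<in> T" "b = 1" | "b \<in> T" "b \<ge> 2" by linarith
  then show ?thesis
  proof cases
    case 1
    then show ?thesis by (intro exI[of _ 1]) (simp add: fac_def)
  next
    case 2
    then show ?thesis using alpha0[OF assms(1) assms(3)] alpha0[OF assms(1) hl] alpha0[OF assms(1) hm]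
      by (intro exI[of _ 1]) (simp add: fac_def)
  next
    case 3
    then show ?thesis by (intro exI[of _ 1]) (simp add: fac_def epow_1)
  next
    case 4
    obtain nk where nk: "alpha_seq S b k = enat nk" using alpha_fin[OF assms(1) assms(3) 4(2)] by auto
    obtain nl where nl: "alpha_seq S b l = enat nl" using alpha_fin[OF assms(1) hl 4(2)] by auto
    obtain nm where nm: "alpha_seq S b (k-l) = enat nm" using alpha_fin[OF assms(1) hm 4(2)] by auto
    have "alpha_seq S b l + alpha_seq S b (k-l) \<le> alpha_seq S b (l + (k-l))"
      using superadd[of S l "k-l" b] assms 4 by simp
    then have le: "nl + nm \<le> nk" using nk nl nm assms(2) by simp
    have e: "nk = nl + nm + (nk - nl - nm)" using le by simp
    have pw: "b ^ nk = b ^ nl * b ^ nm * b ^ (nk - nl - nm)"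
      by (subst e) (simp add: power_add)
    show ?thesis
    proof (intro exI[of _ "b^(nk - nl - nm)"] conjI)
      show "b^(nk-nl-nm) > 0" using 4 by simp
      show "fac S T k b = fac S T l b * fac S T (k-l) b * b^(nk-nl-nm)"
        using 4 nk nl nm pw by (simp add: fac_def)
      show "fac S T l b > 0" using 4 nl by (simp add: fac_def)
      show "fac S T (k-l) b > 0" using 4 nm by (simp add: fac_def)
    qed
  qed
qed

theorem theorem3p14:
  fixes S :: "int set" and T :: "nat set" and k l :: nat
  assumes "S \<noteq> {}"
    and "l \<le> k"
    and "finite S \<longrightarrow> k < card S"
  shows "\<exists>m::nat. m > 0 \<and>
    real (gen_fact S T k) / (real (gen_fact S T l) * real (gen_fact S T (k - l))) = real m"
proof -
  have gf: "gen_fact S T j = Prod_any (fac S T j)" for j by (simp add: gen_fact_def fac_def)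
  have "\<forall>b. \<exists>q. q > 0 \<and> fac S T k b = fac S T l b * fac S T (k-l) b * q \<and> fac S T l b > 0 \<and> fac S T (k-l) b > 0"
    using factor[OF assms] by blast
  from choice[OF this] obtain Q where Q: "\<And>b. Q b > 0" "\<And>b. fac S T k b = fac S T l b * fac S T (k-l) b * Q b"
    "\<And>b. fac S T l b > 0" "\<And>b. fac S T (k-l) b > 0" by blast
  obtain D where D: "\<And>b. b > D \<Longrightarrow> alpha_seq S b k = 0" using alpha_large[OF assms(1) assms(3)] by blast
  define W where "W = {b. fac S T k b \<noteq> 1}"
  have f1: "fac S T k b = 1" if "b > D" for b using D[OF that] by (simp add: fac_def)
  have "W \<subseteq> {..D}"
  proof
    fix b assume "b \<in> W"
    then show "b \<in> {..D}" using f1[of b] by (cases "b \<le> D") (auto simp: W_def)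
  qed
  then have finW: "finite W" using finite_subset by blast
  have one: "fac S T l b = 1 \<and> fac S T (k-l) b = 1 \<and> Q b = 1" if "b \<notin> W" for b
    using that Q(2)[of b] by (simp add: W_def)
  have gk: "gen_fact S T k = prod (fac S T k) W" unfolding gf W_def
    by (rule Prod_any.expand_superset) (use finW in \<open>auto simp: W_def\<close>)
  have gl: "gen_fact S T l = prod (fac S T l) W" unfolding gf
    by (rule Prod_any.expand_superset) (use finW one in auto)
  have gm: "gen_fact S T (k-l) = prod (fac S T (k-l)) W" unfolding gf
    by (rule Prod_any.expand_superset) (use finW one in auto)
  have "gen_fact S T k = gen_fact S T l * gen_fact S T (k-l) * prod Q W"
    unfolding gk gl gm Q(2) by (simp add: prod.distrib)
  moreover have "gen_fact S T l > 0" unfolding gl using Q(3) by (simp add: prod_pos)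
  moreover have "gen_fact S T (k-l) > 0" unfolding gm using Q(4) by (simp add: prod_pos)
  moreover have "prod Q W > 0" using Q(1) by (simp add: prod_pos)
  ultimately show ?thesis
    by (intro exI[of _ "prod Q W"]) (simp add: field_simps)
qed


end
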